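(* Let $S^2\subset\mathbb{R}^3$ be the unit sphere, let $S^2\times\mathbb{R}$ be the trivial line bundle with the standard inner product, and let $TS^2$ carry the metric induced from $\mathbb{R}^3$. Define sections $f_1\equiv 1$, $f_2\equiv f_3\equiv 0$ of $S^2\times\mathbb{R}$ (a moving Parseval frame for it). Although $(S^2\times\mathbb{R})\oplus TS^2\cong S^2\times\mathbb{R}^3$ admits a moving basis, there is no moving basis $(e_i)_{i=1}^3$ of continuous sections of $(S^2\times\mathbb{R})\oplus TS^2$ such that $P_{S^2\times\mathbb{R}}e_i=f_i$ for $i=1,2,3$, where $P_{S^2\times\mathbb{R}}$ is the fiberwise orthogonal projection onto the first summand.
   Context: A moving basis of a rank $k$ vector bundle is a sequence of $k$ sections that form a basis of each fiber. A sequence of vectors $(x_i)_{i=1}^k$ in a finite-dimensional real inner product space $H$ is a Parseval frame for $H$ if $\sum_{i=1}^k\langle x,x_i\rangle^2=\|x\|^2$ for all $x\in H$; a moving Parseval frame of a bundle is a sequence of sections forming a Parseval frame of each fiber. *)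

theory Defs
  imports "HOL-Analysis.Analysis"
begin

definition S2 :: "(real^3) set" where
  "S2 = sphere 0 1"

text \<open>Fiber of the Whitney sum (S^2 x R) (+) TS^2 at x: pairs (t, v) with t in R and
  v in the tangent plane T_x S^2 = {v. v \<bullet> x = 0}, viewed inside R x R^3.\<close>
definition sum_fiber :: "real^3 \<Rightarrow> (real \<times> (real^3)) set" where
  "sum_fiber x = {(t, v). v \<bullet> x = 0}"

definition sum_section :: "(real^3 \<Rightarrow> real \<times> (real^3)) \<Rightarrow> bool" where
  "sum_section s \<longleftrightarrow> continuous_on S2 s \<and> (\<forall>x\<in>S2. s x \<in> sum_fiber x)"

definition sum_moving_basis :: "(nat \<Rightarrow> real^3 \<Rightarrow> real \<times> (real^3)) \<Rightarrow> bool" where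
  "sum_moving_basis e \<longleftrightarrow>
     (\<forall>i\<in>{1..3}. sum_section (e i)) \<and>
     (\<forall>x\<in>S2. inj_on (\<lambda>i. e i x) {1..3} \<and>
              independent ((\<lambda>i. e i x) ` {1..3}) \<and>
              span ((\<lambda>i. e i x) ` {1..3}) = sum_fiber x)"

definition P_line :: "real \<times> (real^3) \<Rightarrow> real \<times> (real^3)" where
  "P_line p = (fst p, 0)"

definition parseval_frame :: "'a::real_inner set \<Rightarrow> (nat \<Rightarrow> 'a) \<Rightarrow> nat \<Rightarrow> bool" where
  "parseval_frame H xs k \<longleftrightarrow> (\<forall>i\<in>{1..k}. xs i \<in> H) \<and>
     (\<forall>y\<in>H. (\<Sum>i=1..k. (y \<bullet> xs i)^2) = (norm y)^2)"

definition f_line :: "nat \<Rightarrow> real^3 \<Rightarrow> real" where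
  "f_line i x = (if i = 1 then 1 else 0)"

end

theory Submission
  imports Defs
begin


lemma circle_no_log_id:
  assumes cg: "continuous_on (sphere (0::complex) 1) g"
    and eq: "\<forall>z\<in>sphere (0::complex) 1. z = exp (g z)"
  shows False
proof -
  let ?C = "sphere (0::complex) 1"
  have re: "Re (g z) = 0" if "z \<in> ?C" for z
  proof -
    have "norm z = 1" using that by simp
    then have "norm (exp (g z)) = 1" using eq that by metis
    then show ?thesis by simp
  qed
  have "\<forall>z\<in>?C. z = exp (\<i> * of_real (Im (g z)))"
  proof
    fix z assume z: "z \<in> ?C"
    have "g z = \<i> * of_real (Im (g z))" using re[OF z] by (simp add: complex_eq_iff)
    then show "z = exp (\<i> * of_real (Im (g z)))" using eq z by metis
  qed
  moreover have "continuous_on ?C (Im \<circ> g)" by (intro continuous_intros cg)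
  ultimately have "\<exists>a. homotopic_with_canon (\<lambda>h. True) ?C (sphere 0 1) id (\<lambda>t. a)"
    unfolding inessential_eq_continuous_logarithm_circle
    by (rule_tac x="Im \<circ> g" in exI) auto
  then have "contractible ?C" unfolding contractible_def by simp
  then show False by (simp add: contractible_sphere)
qed

lemma circle_no_log_sq:
  assumes cK: "continuous_on (sphere (0::complex) 1) K"
    and eq: "\<forall>z\<in>sphere (0::complex) 1. z^2 = exp (K z)"
  shows False
proof -
  let ?C = "sphere (0::complex) 1"
  define w where "w z = z * exp (- K z / 2)" for z
  have w2: "w z = 1 \<or> w z = -1" if "z \<in> ?C" for z
  proof -
    have "(w z)^2 = z^2 * (exp (- K z / 2) * exp (- K z / 2))"
      by (simp add: w_def power2_eq_square)
    also have "\<dots> = z^2 * exp (- K z)" by (simp add: exp_add[symmetric])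
    also have "\<dots> = 1" using eq that by (simp add: exp_minus)
    finally show ?thesis by (simp add: power2_eq_1_iff)
  qed
  have cw: "continuous_on ?C w" unfolding w_def by (intro continuous_intros cK) auto
  have conn: "connected (w ` ?C)"
    by (intro connected_continuous_image cw connected_sphere) simp
  have fin: "finite (w ` ?C)"
    by (rule finite_subset[of _ "{1,-1}"]) (use w2 in fastforce)+
  have ne: "w ` ?C \<noteq> {}" by (metis empty_iff image_is_empty norm_one mem_sphere_0)
  obtain c where c: "w ` ?C = {c}" using connected_finite_iff_sing[OF conn] fin ne by blast
  then have wc: "w z = c" if "z \<in> ?C" for z using that by blast
  have c1: "c = 1 \<or> c = -1" using w2 wc by (metis mem_sphere_0 norm_one)
  define g where "g z = K z / 2 + (if c = 1 then 0 else \<i> * of_real pi)" for z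
  have "\<forall>z\<in>?C. z = exp (g z)"
  proof
    fix z assume z: "z \<in> ?C"
    have "z * exp (- K z / 2) = c" using wc[OF z] by (simp add: w_def)
    then have "z = c * exp (K z / 2)"
      by (metis exp_minus_inverse minus_divide_left mult.assoc mult.right_neutral)
    then show "z = exp (g z)" using c1 by (auto simp: g_def exp_add)
  qed
  moreover have "continuous_on ?C g" unfolding g_def by (intro continuous_intros cK) auto
  ultimately show False using circle_no_log_id by blast
qed

definition pL :: "real\<Rightarrow>real\<Rightarrow>real\<Rightarrow>real\<Rightarrow>real\<Rightarrow>real\<Rightarrow>real" where
  "pL v1 v2 v3 x1 x2 x3 = v1*((1-x3)-x1^2) - v2*x1*x2 + v3*x1*(1-x3)"
definition qL :: "real\<Rightarrow>real\<Rightarrow>real\<Rightarrow>real\<Rightarrow>real\<Rightarrow>real\<Rightarrow>real" where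
  "qL v1 v2 v3 x1 x2 x3 = - v1*x1*x2 + v2*((1-x3)-x2^2) + v3*x2*(1-x3)"
definition cpx :: "real \<Rightarrow> real \<Rightarrow> complex" where "cpx a b = of_real a + \<i> * of_real b"

lemma nzL:
  fixes x1 x2 x3 v1 v2 v3 :: real
  assumes s: "x1^2+x2^2+x3^2 = 1" and x3: "x3 \<noteq> 1" and t: "v1*x1+v2*x2+v3*x3 = 0"
   and p: "pL v1 v2 v3 x1 x2 x3 = 0" and q: "qL v1 v2 v3 x1 x2 x3 = 0"
  shows "v1 = 0 \<and> v2 = 0 \<and> v3 = 0"
proof -
  have k1: "(1-x3)^2 * v1 = pL v1 v2 v3 x1 x2 x3 * ((1-x3)-x1^2)
     + qL v1 v2 v3 x1 x2 x3 * (-x1*x2) + (1-x3)^2*(v1*x1+v2*x2+v3*x3)*x1"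
    using s unfolding pL_def qL_def by algebra
  have k2: "(1-x3)^2 * v2 = pL v1 v2 v3 x1 x2 x3 * (-x1*x2)
     + qL v1 v2 v3 x1 x2 x3 * ((1-x3)-x2^2) + (1-x3)^2*(v1*x1+v2*x2+v3*x3)*x2"
    using s unfolding pL_def qL_def by algebra
  have k3: "(1-x3)^2 * v3 = pL v1 v2 v3 x1 x2 x3 * (x1*(1-x3))
     + qL v1 v2 v3 x1 x2 x3 * (x2*(1-x3)) + (1-x3)^2*(v1*x1+v2*x2+v3*x3)*x3"
    using s unfolding pL_def qL_def by algebra
  have nz: "(1-x3)^2 \<noteq> 0" using x3 by simp
  have "(1-x3)^2 * v1 = 0" "(1-x3)^2 * v2 = 0" "(1-x3)^2 * v3 = 0" using k1 k2 k3 p q t by simp_all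
  then show ?thesis using nz by simp
qed

lemma equator:
  fixes x1 x2 v1 v2 v3 :: real
  assumes s: "x1^2+x2^2 = 1"
  shows "cpx (pL v1 v2 v3 x1 x2 0) (qL v1 v2 v3 x1 x2 0)
     = - ((cpx x1 x2)^2) * cnj (cpx (pL v1 v2 (-v3) x1 x2 0) (qL v1 v2 (-v3) x1 x2 0))"
proof -
  show ?thesis
  unfolding cpx_def pL_def qL_def complex_eq_iff
  apply (simp add: power2_eq_square)
  apply (rule conjI)
  using s by algebra+
qed

definition mk3 :: "real \<Rightarrow> complex \<Rightarrow> real^3" where
  "mk3 s z = (\<chi> i. if i = 1 then Re z else if i = 2 then Im z else s * sqrt (1 - (cmod z)^2))"

lemma mk3_comp [simp]: "mk3 s z $ 1 = Re z" "mk3 s z $ 2 = Im z" "mk3 s z $ 3 = s * sqrt (1 - (cmod z)^2)"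
  by (simp_all add: mk3_def)

lemma inner3: "(x::real^3) \<bullet> y = x$1*y$1 + x$2*y$2 + x$3*y$3"
  by (simp add: inner_vec_def sum_3)

lemma mk3_cont: "continuous_on S (mk3 s)"
  unfolding mk3_def
  apply (intro continuous_on_vec_lambda)
  subgoal for i by (cases "i=1"; cases "i=2") (auto intro!: continuous_intros)
  done


lemma cpx_eq0: "cpx a b = 0 \<Longrightarrow> a = 0 \<and> b = 0"
  by (simp add: cpx_def complex_eq_iff)

lemma mk3_S:
  assumes s: "s = 1 \<or> s = -1" and z: "z \<in> cball (0::complex) 1"
  shows "mk3 s z \<in> sphere 0 1"
proof -
  have c: "cmod z \<le> 1" using z by simp
  then have c2: "(cmod z)^2 \<le> 1" by (simp add: power_le_one)
  have ss: "s * s = 1" using s by auto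
  have "mk3 s z \<bullet> mk3 s z = (Re z)^2 + (Im z)^2 + (s * s) * (sqrt (1 - (cmod z)^2))^2"
    by (simp add: inner3 power2_eq_square algebra_simps)
  also have "\<dots> = 1" using c2 by (simp add: ss cmod_power2)
  finally show ?thesis by (simp add: norm_eq_1)
qed

lemma hairy:
  fixes v :: "real^3 \<Rightarrow> real^3"
  assumes cont: "continuous_on (sphere 0 1) v"
    and tan: "\<And>x. x \<in> sphere 0 1 \<Longrightarrow> v x \<bullet> x = 0"
    and nz: "\<And>x. x \<in> sphere 0 1 \<Longrightarrow> v x \<noteq> 0"
  shows False
proof -
  let ?D = "cball (0::complex) 1"
  define F where "F s z = cpx (pL (v (mk3 s z)$1) (v (mk3 s z)$2) (-s * v (mk3 s z)$3) (mk3 s z$1) (mk3 s z$2) (-s * mk3 s z$3))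
     (qL (v (mk3 s z)$1) (v (mk3 s z)$2) (-s * v (mk3 s z)$3) (mk3 s z$1) (mk3 s z$2) (-s * mk3 s z$3))" for s z
  have logF: "\<exists>G. continuous_on ?D G \<and> (\<forall>z\<in>?D. F s z = exp (G z))" if s: "s = 1 \<or> s = -1" for s
  proof -
    have cv: "continuous_on ?D (\<lambda>z. v (mk3 s z))"
      by (rule continuous_on_compose2[OF cont mk3_cont]) (use mk3_S[OF s] in auto)
    have cF: "continuous_on ?D (F s)"
      unfolding F_def cpx_def pL_def qL_def
      by (intro continuous_intros cv mk3_cont)
    have nF: "F s z \<noteq> 0" if z: "z \<in> ?D" for z
    proof
      assume "F s z = 0"
      then have pq: "pL (v (mk3 s z)$1) (v (mk3 s z)$2) (-s * v (mk3 s z)$3) (mk3 s z$1) (mk3 s z$2) (-s * mk3 s z$3) = 0"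
         "qL (v (mk3 s z)$1) (v (mk3 s z)$2) (-s * v (mk3 s z)$3) (mk3 s z$1) (mk3 s z$2) (-s * mk3 s z$3) = 0"
        unfolding F_def by (auto dest: cpx_eq0)
      have ss: "s * s = 1" using s by auto
      have e: "(-s * a) * (-s * b) = a * b" for a b :: real
      proof -
        have "(-s * a) * (-s * b) = (s * s) * (a * b)" by algebra
        then show ?thesis using ss by simp
      qed
      have S: "mk3 s z \<in> sphere 0 1" using mk3_S[OF s z] .
      then have "mk3 s z \<bullet> mk3 s z = 1" by (simp add: norm_eq_1)
      then have "mk3 s z$1 * mk3 s z$1 + mk3 s z$2 * mk3 s z$2 + (-s * mk3 s z$3) * (-s * mk3 s z$3) = 1"
        unfolding e inner3[symmetric] .
      then have sq: "(mk3 s z$1)^2 + (mk3 s z$2)^2 + (-s * mk3 s z$3)^2 = 1"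
        by (simp only: power2_eq_square)
      have ne: "-s * mk3 s z$3 \<noteq> 1"
      proof -
        have "-s * mk3 s z$3 = - ((s * s) * sqrt (1 - (cmod z)^2))" by simp
        also have "\<dots> \<le> 0" using ss z by (simp add: power_le_one)
        finally show ?thesis by linarith
      qed
      have "v (mk3 s z) \<bullet> mk3 s z = 0" using tan[OF S] .
      have t: "v (mk3 s z)$1 * mk3 s z$1 + v (mk3 s z)$2 * mk3 s z$2 + (-s * v (mk3 s z)$3) * (-s * mk3 s z$3) = 0"
        unfolding e inner3[symmetric] by fact
      from nzL[OF sq ne t pq] have h: "v (mk3 s z)$1 = 0" "v (mk3 s z)$2 = 0" "-s * v (mk3 s z)$3 = 0"
        by blast+
      have "s \<noteq> 0" using s by auto
      with h have "v (mk3 s z)$1 = 0" "v (mk3 s z)$2 = 0" "v (mk3 s z)$3 = 0" by simp_all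
      then have "v (mk3 s z) = 0" by (simp add: vec_eq_iff forall_3)
      with nz[OF S] show False by simp
    qed
    have B: "Borsukian ?D" by (rule convex_imp_Borsukian) simp
    have "F s \<in> ?D \<rightarrow> -{0}" using nF by auto
    from B[unfolded Borsukian_continuous_logarithm, rule_format, OF conjI[OF cF this]]
    show ?thesis by blast
  qed
  obtain G where cG: "continuous_on ?D G" and G: "\<forall>z\<in>?D. F (-1) z = exp (G z)"
    using logF[of "-1"] by auto
  obtain H where cH: "continuous_on ?D H" and H: "\<forall>z\<in>?D. F 1 z = exp (H z)"
    using logF[of 1] by auto
  define K where "K z = G z - cnj (H z) + \<i> * of_real pi" for z
  have "continuous_on (sphere 0 1) K"
    unfolding K_def
    by (intro continuous_intros continuous_on_subset[OF cG] continuous_on_subset[OF cH] sphere_cball)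
  moreover have "\<forall>z\<in>sphere (0::complex) 1. z^2 = exp (K z)"
  proof
    fix z :: complex assume z: "z \<in> sphere 0 1"
    then have zD: "z \<in> ?D" by simp
    have cm: "cmod z = 1" using z by simp
    have m: "mk3 1 z = mk3 (-1) z" using cm by (simp add: vec_eq_iff forall_3)
    have m3: "mk3 (-1) z $ 3 = 0" using cm by simp
    have x12: "(Re z)^2 + (Im z)^2 = 1" using cm by (simp add: cmod_power2[symmetric])
    have zz: "cpx (Re z) (Im z) = z" by (simp add: cpx_def complex_eq_iff)
    have n1: "-(-1::real) * a = a" "-(1::real) * a = - a" "- (0::real) = 0" for a by simp_all
    have eq: "F (-1) z = - (z^2) * cnj (F 1 z)"
      unfolding F_def m m3 n1 mk3_comp(1,2)
      using equator[OF x12] unfolding zz .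
    have e0: "exp (cnj (H z)) \<noteq> 0" by simp
    have "exp (G z) = - (z^2) * exp (cnj (H z))"
      using eq G H zD by (simp only: exp_cnj)
    then have "z^2 = - exp (G z) / exp (cnj (H z))" using e0 by (simp add: field_simps)
    also have "\<dots> = exp (K z)"
      by (simp add: K_def exp_add exp_diff)
    finally show "z^2 = exp (K z)" .
  qed
  ultimately show False by (rule circle_no_log_sq)
qed

definition Mx :: "real^3 \<Rightarrow> real^3 \<Rightarrow> real \<times> (real^3)" where
  "Mx x w = (w \<bullet> x, w - (w \<bullet> x) *\<^sub>R x)"

lemma Mx_linear: "linear (Mx x)"
  unfolding linear_iff Mx_def
  by (auto simp: inner_add_left algebra_simps)

lemma S2_inner: "x \<in> S2 \<Longrightarrow> x \<bullet> x = 1"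
  by (simp add: S2_def norm_eq_1)

lemma Mx_inj: "x \<in> S2 \<Longrightarrow> inj (Mx x)"
  unfolding inj_def Mx_def by (auto simp: prod_eq_iff)

lemma Mx_range: assumes "x \<in> S2" shows "range (Mx x) = sum_fiber x"
proof
  show "range (Mx x) \<subseteq> sum_fiber x"
    using S2_inner[OF assms] by (auto simp: Mx_def sum_fiber_def inner_diff_left)
  show "sum_fiber x \<subseteq> range (Mx x)"
  proof
    fix p assume "p \<in> sum_fiber x"
    then obtain t u where p: "p = (t, u)" and u: "u \<bullet> x = 0" by (auto simp: sum_fiber_def)
    have "Mx x (t *\<^sub>R x + u) = (t, u)"
      using S2_inner[OF assms] u by (simp add: Mx_def inner_add_left)
    then show "p \<in> range (Mx x)" using p by (metis rangeI)
  qed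
qed

theorem mainTheorem5:
  shows "(\<forall>x\<in>S2. parseval_frame (UNIV :: real set) (\<lambda>i. f_line i x) 3) \<and>
         (\<exists>e. sum_moving_basis e) \<and>
         \<not> (\<exists>e. sum_moving_basis e \<and>
               (\<forall>i\<in>{1..3}. \<forall>x\<in>S2. P_line (e i x) = (f_line i x, 0)))"
proof (intro conjI)
  show "\<forall>x\<in>S2. parseval_frame (UNIV :: real set) (\<lambda>i. f_line i x) 3"
  proof
    fix x :: "real^3"
    have "{1..3::nat} = {1,2,3}" by auto
    then show "parseval_frame (UNIV :: real set) (\<lambda>i. f_line i x) 3"
      by (simp add: parseval_frame_def f_line_def)
  qed
next
  have "finite {1..3::nat}" "finite (Basis :: (real^3) set)" by simp_all
  moreover have "card {1..3::nat} = card (Basis :: (real^3) set)" by simp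
  ultimately obtain g where g: "bij_betw g {1..3::nat} (Basis :: (real^3) set)"
    by (metis bij_betw_iff_card)
  define e where "e i x = Mx x (g i)" for i x
  have gB: "g ` {1..3} = Basis" using g by (simp add: bij_betw_def)
  have ginj: "inj_on g {1..3}" using g by (simp add: bij_betw_def)
  have img: "(\<lambda>i. e i x) ` {1..3} = Mx x ` Basis" for x
  proof -
    have "(\<lambda>i. e i x) ` {1..3} = Mx x ` (g ` {1..3})" by (simp add: e_def image_image)
    then show ?thesis by (simp only: gB)
  qed
  have "sum_moving_basis e"
    unfolding sum_moving_basis_def
  proof (intro conjI ballI)
    fix i :: nat assume "i \<in> {1..3}"
    show "sum_section (e i)"
      unfolding sum_section_def
    proof
      show "continuous_on S2 (e i)" unfolding e_def Mx_def by (intro continuous_intros)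
      show "\<forall>x\<in>S2. e i x \<in> sum_fiber x"
      proof
        fix x assume x: "x \<in> S2"
        have "Mx x (g i) \<in> range (Mx x)" by (rule rangeI)
        then show "e i x \<in> sum_fiber x" unfolding e_def Mx_range[OF x] .
      qed
    qed
  next
    fix x assume x: "x \<in> S2"
    show "inj_on (\<lambda>i. e i x) {1..3}"
    proof -
      have "inj_on (Mx x \<circ> g) {1..3}"
        by (rule comp_inj_on[OF ginj inj_on_subset[OF Mx_inj[OF x] subset_UNIV]])
      then show ?thesis by (simp add: e_def comp_def)
    qed
    show "independent ((\<lambda>i. e i x) ` {1..3})"
      unfolding img
      by (rule linear_independent_injective_image[OF Mx_linear independent_Basis])
         (rule inj_on_subset[OF Mx_inj[OF x] subset_UNIV])
    show "span ((\<lambda>i. e i x) ` {1..3}) = sum_fiber x"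
      unfolding img span_linear_image[OF Mx_linear] span_Basis using Mx_range[OF x] .
  qed
  then show "\<exists>e. sum_moving_basis e" by blast
next
  show "\<not> (\<exists>e. sum_moving_basis e \<and>
               (\<forall>i\<in>{1..3}. \<forall>x\<in>S2. P_line (e i x) = (f_line i x, 0)))"
  proof
    assume "\<exists>e. sum_moving_basis e \<and> (\<forall>i\<in>{1..3}. \<forall>x\<in>S2. P_line (e i x) = (f_line i x, 0))"
    then obtain e where mb: "sum_moving_basis e"
      and P: "\<forall>i\<in>{1..3}. \<forall>x\<in>S2. P_line (e i x) = (f_line i x, 0)" by blast
    have two: "(2::nat) \<in> {1..3}" by simp
    have sec: "sum_section (e 2)" using mb two unfolding sum_moving_basis_def by blast
    have fst0: "fst (e 2 x) = 0" if "x \<in> S2" for x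
      using P two that by (auto simp: P_line_def f_line_def)
    show False
    proof (rule hairy)
      show "continuous_on (sphere 0 1) (\<lambda>x. snd (e 2 x))"
        using sec unfolding sum_section_def S2_def by (intro continuous_intros) auto
      fix x :: "real^3" assume x: "x \<in> sphere 0 1"
      then have xS: "x \<in> S2" by (simp add: S2_def)
      show "snd (e 2 x) \<bullet> x = 0"
        using sec xS unfolding sum_section_def sum_fiber_def by (auto simp: case_prod_beta)
      show "snd (e 2 x) \<noteq> 0"
      proof
        assume "snd (e 2 x) = 0"
        then have "e 2 x = 0" using fst0[OF xS] by (simp add: prod_eq_iff)
        then have "0 \<in> (\<lambda>i. e i x) ` {1..3}" using two by force
        then have "dependent ((\<lambda>i. e i x) ` {1..3})" by (rule dependent_zero)
        then show False using mb xS unfolding sum_moving_basis_def by blast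
      qed
    qed
  qed
qed

end
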